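(* Let $\gamma\in\mathcal{C}$ be a convex curve. Then $$\frac{L_*(\gamma)^2}{4A_U}=A_\gamma-2A_{WC(\gamma)}-A_{CWMS(\gamma)}.$$
   Context: Standing setting. $[a,b]$ is the $2\times2$ determinant with columns $a,b$. The unit ball $U$ of a normed plane is compact convex, origin-symmetric, with nonempty interior, and boundary $u=\partial U$ a union of $2n$ arcs $u_{i+n}=-u_i$, each a smooth strictly convex arc or a segment; $u$ is parameterized as a closed curve $u:[0,2T]\to\mathbb{R}^2$ with $u(t+T)=-u(t)$, smooth with $u'\ne0$ on each interval $[t_i,t_{i+1}]$ between vertices ($[u',u'']\neq 0$ on strictly convex arcs); $A_U=\frac12\int_0^{2T}[u,u']dt$ is the area of $U$. Admissible class $\mathcal{C}$: closed continuous curves $\gamma:[0,2T]\to\mathbb{R}^2$ (extended $2T$-periodically), smooth on each $[t_i,t_{i+1}]$ with $\gamma'(t)=r(t)u'(t)$ for a scalar function $r$. Dual length $L_*(\gamma)=\int_0^{2T} r(t)[u,u'](t)\,dt$; mean width $w_\gamma=L_*(\gamma)/A_U$. $A_\gamma=\frac12\int_0^{2T}[\gamma,\gamma'](t)dt$ (the signed area, equal to the enclosed area for a positively oriented convex curve). $WC(\gamma)(t)=\frac12(\gamma(t)+\gamma(t+T))$, which is $T$-periodic, and $A_{WC(\gamma)}=\frac12\int_0^{T}[WC(\gamma),WC(\gamma)'](t)\,dt$ is its signed area over one period. $CWMS(\gamma)(t)=\frac12(\gamma(t)-\gamma(t+T)-w_\gamma u(t))$ and $A_{CWMS(\gamma)}=\frac12\int_0^{2T}[CWMS(\gamma),CWMS(\gamma)'](t)\,dt$.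 *)

theory Defs
  imports "HOL-Analysis.Analysis"
begin

definition det2 :: "real^2 \<Rightarrow> real^2 \<Rightarrow> real" where
  "det2 a b = a$1 * b$2 - a$2 * b$1"

definition vd :: "(real \<Rightarrow> real^2) \<Rightarrow> real \<Rightarrow> real \<Rightarrow> real \<Rightarrow> real^2" where
  "vd f a b t = vector_derivative f (at t within {a..b})"

definition smooth_ivl :: "(real \<Rightarrow> real^2) \<Rightarrow> real \<Rightarrow> real \<Rightarrow> bool" where
  "smooth_ivl f a b \<longleftrightarrow>
     (\<forall>k. \<forall>t\<in>{a..b}. ((\<lambda>g. vd g a b) ^^ k) f differentiable (at t within {a..b}))"

text \<open>Signed area (1/2) integral of [f,f'] over [tp 0, tp m], computed piece by piece
  (the derivative is only defined piecewise, vertices form a null set).\<close>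
definition parea :: "(nat \<Rightarrow> real) \<Rightarrow> nat \<Rightarrow> (real \<Rightarrow> real^2) \<Rightarrow> real" where
  "parea tp m f = (1/2) * (\<Sum>i<m. integral {tp i..tp (Suc i)}
        (\<lambda>t. det2 (f t) (vd f (tp i) (tp (Suc i)) t)))"

definition Lstar :: "(nat \<Rightarrow> real) \<Rightarrow> nat \<Rightarrow> (real \<Rightarrow> real^2) \<Rightarrow> (real \<Rightarrow> real) \<Rightarrow> real" where
  "Lstar tp n u r = (\<Sum>i<2*n. integral {tp i..tp (Suc i)}
        (\<lambda>t. r t * det2 (u t) (vd u (tp i) (tp (Suc i)) t)))"

definition WC :: "real \<Rightarrow> (real \<Rightarrow> real^2) \<Rightarrow> real \<Rightarrow> real^2" where
  "WC T \<gamma> t = (1/2) *\<^sub>R (\<gamma> t + \<gamma> (t + T))"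

definition CWMS :: "real \<Rightarrow> real \<Rightarrow> (real \<Rightarrow> real^2) \<Rightarrow> (real \<Rightarrow> real^2) \<Rightarrow> real \<Rightarrow> real^2" where
  "CWMS T w u \<gamma> t = (1/2) *\<^sub>R (\<gamma> t - \<gamma> (t + T) - w *\<^sub>R u t)"

definition unit_ball_setting ::
  "(real^2) set \<Rightarrow> (real \<Rightarrow> real^2) \<Rightarrow> real \<Rightarrow> nat \<Rightarrow> (nat \<Rightarrow> real) \<Rightarrow> bool" where
  "unit_ball_setting U u T n tp \<longleftrightarrow>
     compact U \<and> convex U \<and> (\<forall>x\<in>U. - x \<in> U) \<and> interior U \<noteq> {} \<and>
     T > 0 \<and> n \<ge> 1 \<and>
     tp 0 = 0 \<and> tp (2*n) = 2*T \<and> (\<forall>i<2*n. tp i < tp (Suc i)) \<and>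
     (\<forall>i\<le>n. tp (i + n) = tp i + T) \<and>
     continuous_on UNIV u \<and> (\<forall>t. u (t + T) = - u t) \<and>
     inj_on u {0..<2*T} \<and> frontier U = u ` {0..2*T} \<and>
     (\<forall>i<2*n. smooth_ivl u (tp i) (tp (Suc i)) \<and>
        (\<forall>t\<in>{tp i..tp (Suc i)}. vd u (tp i) (tp (Suc i)) t \<noteq> 0) \<and>
        ((\<forall>t\<in>{tp i..tp (Suc i)}.
            det2 (vd u (tp i) (tp (Suc i)) t)
                 (vd (vd u (tp i) (tp (Suc i))) (tp i) (tp (Suc i)) t) \<noteq> 0)
         \<or> u ` {tp i..tp (Suc i)} = closed_segment (u (tp i)) (u (tp (Suc i))))) \<and>
     parea tp (2*n) u = measure lebesgue U"

definition admissible ::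
  "(real \<Rightarrow> real^2) \<Rightarrow> real \<Rightarrow> nat \<Rightarrow> (nat \<Rightarrow> real) \<Rightarrow> (real \<Rightarrow> real^2) \<Rightarrow> (real \<Rightarrow> real) \<Rightarrow> bool" where
  "admissible u T n tp \<gamma> r \<longleftrightarrow>
     continuous_on UNIV \<gamma> \<and> (\<forall>t. \<gamma> (t + 2*T) = \<gamma> t) \<and>
     (\<forall>i<2*n. smooth_ivl \<gamma> (tp i) (tp (Suc i)) \<and>
        (\<forall>t\<in>{tp i<..<tp (Suc i)}.
           vd \<gamma> (tp i) (tp (Suc i)) t = r t *\<^sub>R vd u (tp i) (tp (Suc i)) t))"

definition convex_curve :: "(real \<Rightarrow> real^2) \<Rightarrow> real \<Rightarrow> bool" where
  "convex_curve \<gamma> T \<longleftrightarrow>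
     (\<exists>K. compact K \<and> convex K \<and> interior K \<noteq> {} \<and> \<gamma> ` {0..2*T} = frontier K)"

end

theory Submission
  imports Defs
begin


lemma smooth_hvd:
  assumes "smooth_ivl f a b" "t \<in> {a..b}"
  shows "(f has_vector_derivative vd f a b t) (at t within {a..b})"
proof -
  have "f differentiable (at t within {a..b})"
    using assms unfolding smooth_ivl_def by (metis funpow_0)
  thus ?thesis unfolding vd_def by (simp add: vector_derivative_works)
qed

lemma smooth_cont_vd:
  assumes "smooth_ivl f a b"
  shows "continuous_on {a..b} (vd f a b)"
proof -
  have "\<forall>t\<in>{a..b}. ((\<lambda>g. vd g a b) ^^ 1) f differentiable (at t within {a..b})"
    using assms unfolding smooth_ivl_def by blast
  hence "\<forall>t\<in>{a..b}. vd f a b differentiable (at t within {a..b})" by simp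
  thus ?thesis
    by (simp add: continuous_on_eq_continuous_within differentiable_imp_continuous_within)
qed

lemma smooth_cont:
  assumes "smooth_ivl f a b"
  shows "continuous_on {a..b} f"
proof -
  have "\<forall>t\<in>{a..b}. f differentiable (at t within {a..b})"
    using assms unfolding smooth_ivl_def by (metis funpow_0)
  thus ?thesis
    by (simp add: continuous_on_eq_continuous_within differentiable_imp_continuous_within)
qed

lemma hvd_shift:
  assumes "(f has_vector_derivative f') (at (t+c) within {a+c..b+c})"
  shows "((\<lambda>s. f (s+c)) has_vector_derivative f') (at t within {a..b})"
proof -
  have 1: "((\<lambda>x. x + c) has_vector_derivative 1) (at t within {a..b})"
    by (auto intro!: derivative_eq_intros)
  have "(\<lambda>x. x + c) ` {a..b} = {a+c..b+c}" by simp
  with assms have "(f has_vector_derivative f') (at ((\<lambda>x. x + c) t) within (\<lambda>x. x + c) ` {a..b})" by simp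
  from vector_diff_chain_within[OF 1 this] show ?thesis by (simp add: o_def)
qed

lemma det2_hvd:
  assumes "(f has_vector_derivative f') (at t within S)" "(g has_vector_derivative g') (at t within S)"
  shows "((\<lambda>t. det2 (f t) (g t)) has_vector_derivative (det2 f' (g t) + det2 (f t) g')) (at t within S)"
proof -
  have c: "\<And>h h' i. (h has_vector_derivative h') (at t within S) \<Longrightarrow> ((\<lambda>t. h t $ i) has_vector_derivative h' $ i) (at t within S)"
    by (rule bounded_linear.has_vector_derivative[OF bounded_linear_vec_nth])
  have "((\<lambda>t. f t $ 1 * g t $ 2 - f t $ 2 * g t $ 1) has_vector_derivative
     (f t $ 1 * g' $ 2 + f' $ 1 * g t $ 2 - (f t $ 2 * g' $ 1 + f' $ 2 * g t $ 1))) (at t within S)"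
    by (intro has_vector_derivative_diff has_vector_derivative_mult c assms)
  thus ?thesis unfolding det2_def by (rule has_vector_derivative_eq_rhs) (simp add: algebra_simps)
qed

lemma hvd_scale:
  "(f has_vector_derivative f') F \<Longrightarrow> ((\<lambda>x. c *\<^sub>R f x) has_vector_derivative c *\<^sub>R f') F"
  by (rule bounded_linear.has_vector_derivative[OF bounded_linear_scaleR_right])

lemma det2_scaleR_right: "det2 a (c *\<^sub>R b) = c * det2 a b"
  by (simp add: det2_def algebra_simps)

lemma det2_neg_left: "det2 (- a) b = - det2 a b"
  by (simp add: det2_def algebra_simps)

lemma sum_split2: "(\<Sum>i<2*(n::nat). f i) = (\<Sum>i<n. f i) + (\<Sum>i<n. f (i+n)::real)"
proof -
  have "(\<Sum>i<n+n. f i) = (\<Sum>i<n. f i) + (\<Sum>i\<in>{n..<n+n}. f i)"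
    by (metis add.commute le_add2 lessThan_atLeast0 sum.atLeastLessThan_concat zero_le)
  also have "(\<Sum>i\<in>{n..<n+n}. f i) = (\<Sum>i<n. f (i+n))"
    using sum.shift_bounds_nat_ivl[of f 0 n n] by (simp add: lessThan_atLeast0 add.commute)
  finally show ?thesis by (simp add: mult_2)
qed

lemma pointwise:
  fixes a b u A B V :: "real^2"
  shows "(1/2) * det2 a A - (1/2) * det2 ((1/2) *\<^sub>R (a + b)) ((1/2) *\<^sub>R (A + B))
     - (1/2) * det2 ((1/2) *\<^sub>R (a - b - w *\<^sub>R u)) ((1/2) *\<^sub>R (A - B - w *\<^sub>R V))
   = (1/4) * det2 a A - (1/4) * det2 b B - (w/8) * (det2 V (a - b) + det2 u (A - B))
     + (w/4) * (det2 u A - det2 u B) - (w^2/8) * det2 u V"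
  unfolding det2_def by (simp add: power2_eq_square algebra_simps)

lemma int_comb6:
  fixes X Y D P Q R :: "real \<Rightarrow> real"
  assumes "continuous_on {a..b} X" "continuous_on {a..b} Y" "continuous_on {a..b} D"
    "continuous_on {a..b} P" "continuous_on {a..b} Q" "continuous_on {a..b} R"
  shows "integral {a..b} (\<lambda>t. c1 * X t - c2 * Y t - c3 * D t + c4 * (P t - Q t) - c5 * R t)
     = c1 * integral {a..b} X - c2 * integral {a..b} Y - c3 * integral {a..b} D
       + c4 * (integral {a..b} P - integral {a..b} Q) - c5 * integral {a..b} R"
proof -
  have i: "\<And>f::real\<Rightarrow>real. continuous_on {a..b} f \<Longrightarrow> (f has_integral integral {a..b} f) {a..b}"
    by (intro integrable_integral integrable_continuous_interval)
  have "((\<lambda>t. c1 * X t - c2 * Y t - c3 * D t + c4 * (P t - Q t) - c5 * R t) has_integral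
     (c1 * integral {a..b} X - c2 * integral {a..b} Y - c3 * integral {a..b} D
       + c4 * (integral {a..b} P - integral {a..b} Q) - c5 * integral {a..b} R)) {a..b}"
    by (rule has_integral_diff[OF has_integral_add[OF has_integral_diff[OF has_integral_diff[OF
      has_integral_mult_right[OF i[OF assms(1)]] has_integral_mult_right[OF i[OF assms(2)]]]
      has_integral_mult_right[OF i[OF assms(3)]]] has_integral_mult_right[OF has_integral_diff[OF
      i[OF assms(4)] i[OF assms(5)]]]] has_integral_mult_right[OF i[OF assms(6)]]])
  thus ?thesis by (rule integral_unique)
qed

lemma int_comb3:
  fixes X Y Z :: "real \<Rightarrow> real"
  assumes "continuous_on {a..b} X" "continuous_on {a..b} Y" "continuous_on {a..b} Z"
  shows "integral {a..b} (\<lambda>t. c1 * X t - c2 * Y t - c3 * Z t)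
     = c1 * integral {a..b} X - c2 * integral {a..b} Y - c3 * integral {a..b} Z"
proof -
  have i: "\<And>f::real\<Rightarrow>real. continuous_on {a..b} f \<Longrightarrow> (f has_integral integral {a..b} f) {a..b}"
    by (intro integrable_integral integrable_continuous_interval)
  have "((\<lambda>t. c1 * X t - c2 * Y t - c3 * Z t) has_integral
     (c1 * integral {a..b} X - c2 * integral {a..b} Y - c3 * integral {a..b} Z)) {a..b}"
    by (rule has_integral_diff[OF has_integral_diff[OF
      has_integral_mult_right[OF i[OF assms(1)]] has_integral_mult_right[OF i[OF assms(2)]]]
      has_integral_mult_right[OF i[OF assms(3)]]])
  thus ?thesis by (rule integral_unique)
qed

lemma cont_det2:
  "continuous_on S f \<Longrightarrow> continuous_on S g \<Longrightarrow> continuous_on S (\<lambda>t. det2 (f t) (g t))"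
  unfolding det2_def by (intro continuous_intros)



theorem mainTheorem10:
  fixes U :: "(real^2) set" and u \<gamma> :: "real \<Rightarrow> real^2" and r :: "real \<Rightarrow> real"
    and T :: real and n :: nat and tp :: "nat \<Rightarrow> real"
  assumes "unit_ball_setting U u T n tp"
    and "admissible u T n tp \<gamma> r"
    and "convex_curve \<gamma> T"
  shows "(Lstar tp n u r)^2 / (4 * parea tp (2*n) u)
       = parea tp (2*n) \<gamma>
         - 2 * parea tp n (WC T \<gamma>)
         - parea tp (2*n) (CWMS T (Lstar tp n u r / parea tp (2*n) u) u \<gamma>)"
proof -
  note S = assms(1)[unfolded unit_ball_setting_def]
  note Ad = assms(2)[unfolded admissible_def]
  have T0: "T > 0" and tp0: "tp 0 = 0" and tp2n: "tp (2*n) = 2*T"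
    and mono: "\<And>i. i < 2*n \<Longrightarrow> tp i < tp (Suc i)"
    and tpT: "\<And>i. i \<le> n \<Longrightarrow> tp (i+n) = tp i + T"
    and ucont: "continuous_on UNIV u" and uT: "\<And>t. u (t+T) = - u t"
    and usm: "\<And>i. i < 2*n \<Longrightarrow> smooth_ivl u (tp i) (tp (Suc i))"
    using S by auto
  have gcont: "continuous_on UNIV \<gamma>" and g2T: "\<And>t. \<gamma> (t + 2*T) = \<gamma> t"
    and gsm: "\<And>i. i < 2*n \<Longrightarrow> smooth_ivl \<gamma> (tp i) (tp (Suc i))"
    and gr: "\<And>i t. i < 2*n \<Longrightarrow> t \<in> {tp i<..<tp (Suc i)} \<Longrightarrow>
       vd \<gamma> (tp i) (tp (Suc i)) t = r t *\<^sub>R vd u (tp i) (tp (Suc i)) t"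
    using Ad by auto
  define G where "G i = vd \<gamma> (tp i) (tp (Suc i))" for i
  define V where "V i = vd u (tp i) (tp (Suc i))" for i
  define \<sigma> where "\<sigma> i = (if i < n then i+n else i-n)" for i
  define e where "e i = (if i < n then T else -T)" for i
  define L where "L = Lstar tp n u r"
  define Au where "Au = parea tp (2*n) u"
  define w where "w = L / Au"
  have sig: "\<sigma> i < 2*n \<and> \<sigma> (\<sigma> i) = i \<and> tp (\<sigma> i) = tp i + e i \<and> tp (Suc (\<sigma> i)) = tp (Suc i) + e i"
    if "i < 2*n" for i
  proof (cases "i < n")
    case True
    then show ?thesis using tpT[of i] tpT[of "Suc i"] by (auto simp: \<sigma>_def e_def)
  next
    case False
    have 1: "tp i = tp (i-n) + T" using tpT[of "i-n"] False that by simp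
    have 2: "tp (Suc i) = tp (Suc (i-n)) + T" using tpT[of "Suc (i-n)"] False that by (simp add: Suc_diff_le)
    show ?thesis using False that 1 2 by (auto simp: \<sigma>_def e_def Suc_diff_le)
  qed
  have gshift: "\<gamma> (t + T) = \<gamma> (t + e i)" for i t
  proof (cases "i < n")
    case False
    have "\<gamma> (t - T + 2*T) = \<gamma> (t - T)" by (rule g2T)
    moreover have "t - T + 2*T = t + T" by simp
    ultimately show ?thesis using False by (simp add: e_def)
  qed (simp add: e_def)
  have ushift: "u (t + e i) = - u t" for i t
  proof (cases "i < n")
    case False
    have "u (t - T + T) = - u (t - T)" by (rule uT)
    thus ?thesis using False by (simp add: e_def)
  qed (simp add: e_def uT)
  have sigperm: "(\<Sum>i<2*n. f (\<sigma> i)) = (\<Sum>i<2*n. f i)" for f :: "nat \<Rightarrow> real"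
    by (rule sum.reindex_bij_witness[of _ \<sigma> \<sigma>]) (use sig in auto)
  have shiftsum: "(\<Sum>i<2*n. integral {tp i..tp (Suc i)} (\<lambda>t. F (\<sigma> i) (t + e i)))
      = (\<Sum>i<2*n. integral {tp i..tp (Suc i)} (F i))" for F :: "nat \<Rightarrow> real \<Rightarrow> real"
  proof -
    have "integral {tp i..tp (Suc i)} (\<lambda>t. F (\<sigma> i) (t + e i))
        = integral {tp (\<sigma> i)..tp (Suc (\<sigma> i))} (F (\<sigma> i))" if "i < 2*n" for i
      using integral_shift_Icc_real[of "tp i" "tp (Suc i)" "F (\<sigma> i)" "e i"] sig[OF that]
      by (simp add: o_def add.commute)
    hence "(\<Sum>i<2*n. integral {tp i..tp (Suc i)} (\<lambda>t. F (\<sigma> i) (t + e i)))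
        = (\<Sum>i<2*n. integral {tp (\<sigma> i)..tp (Suc (\<sigma> i))} (F (\<sigma> i)))" by simp
    also have "\<dots> = (\<Sum>i<2*n. integral {tp i..tp (Suc i)} (F i))"
      by (rule sigperm[of "\<lambda>j. integral {tp j..tp (Suc j)} (F j)"])
    finally show ?thesis .
  qed
  have hG: "(\<gamma> has_vector_derivative G i t) (at t within {tp i..tp (Suc i)})"
    if "i < 2*n" "t \<in> {tp i..tp (Suc i)}" for i t
    unfolding G_def by (rule smooth_hvd[OF gsm[OF that(1)] that(2)])
  have hV: "(u has_vector_derivative V i t) (at t within {tp i..tp (Suc i)})"
    if "i < 2*n" "t \<in> {tp i..tp (Suc i)}" for i t
    unfolding V_def by (rule smooth_hvd[OF usm[OF that(1)] that(2)])
  have cG: "continuous_on {tp i..tp (Suc i)} (G i)" if "i < 2*n" for i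
    unfolding G_def by (rule smooth_cont_vd[OF gsm[OF that]])
  have cV: "continuous_on {tp i..tp (Suc i)} (V i)" if "i < 2*n" for i
    unfolding V_def by (rule smooth_cont_vd[OF usm[OF that]])
  have hB: "((\<lambda>s. \<gamma> (s + T)) has_vector_derivative G (\<sigma> i) (t + e i)) (at t within {tp i..tp (Suc i)})"
    if "i < 2*n" "t \<in> {tp i..tp (Suc i)}" for i t
  proof -
    have s: "\<sigma> i < 2*n" "tp (\<sigma> i) = tp i + e i" "tp (Suc (\<sigma> i)) = tp (Suc i) + e i"
      using sig[OF that(1)] by auto
    have "t + e i \<in> {tp (\<sigma> i)..tp (Suc (\<sigma> i))}" using that(2) s by auto
    from hG[OF s(1) this] s have "(\<gamma> has_vector_derivative G (\<sigma> i) (t + e i))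
        (at (t + e i) within {tp i + e i..tp (Suc i) + e i})" by simp
    from hvd_shift[OF this] have "((\<lambda>s. \<gamma> (s + e i)) has_vector_derivative G (\<sigma> i) (t + e i))
        (at t within {tp i..tp (Suc i)})" .
    moreover have "(\<lambda>s. \<gamma> (s + T)) = (\<lambda>s. \<gamma> (s + e i))" using gshift by auto
    ultimately show ?thesis by simp
  qed
  have cB: "continuous_on {tp i..tp (Suc i)} (\<lambda>t. G (\<sigma> i) (t + e i))" if "i < 2*n" for i
  proof -
    have s: "\<sigma> i < 2*n" "tp (\<sigma> i) = tp i + e i" "tp (Suc (\<sigma> i)) = tp (Suc i) + e i"
      using sig[OF that(1)] by auto
    have "continuous_on {tp i..tp (Suc i)} (\<lambda>t. t + e i)" by (intro continuous_intros)
    moreover have "(\<lambda>t. t + e i) ` {tp i..tp (Suc i)} \<subseteq> {tp (\<sigma> i)..tp (Suc (\<sigma> i))}" using s by auto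
    ultimately show ?thesis by (rule continuous_on_compose2[OF cG[OF s(1)]])
  qed
  have cg: "continuous_on A \<gamma>" for A using gcont continuous_on_subset by blast
  have cu: "continuous_on A u" for A using ucont continuous_on_subset by blast
  have cgT: "continuous_on A (\<lambda>t. \<gamma> (t + T))" for A
    by (rule continuous_on_compose2[OF gcont]) (auto intro: continuous_intros)
  have vdWC: "vd (WC T \<gamma>) (tp i) (tp (Suc i)) t = (1/2) *\<^sub>R (G i t + G (\<sigma> i) (t + e i))"
    if "i < 2*n" "t \<in> {tp i..tp (Suc i)}" for i t
    unfolding vd_def WC_def
    by (rule vector_derivative_within_closed_interval[OF mono[OF that(1)] that(2)])
       (intro hvd_scale has_vector_derivative_add hG hB that)
  have vdC: "vd (CWMS T w u \<gamma>) (tp i) (tp (Suc i)) t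
      = (1/2) *\<^sub>R (G i t - G (\<sigma> i) (t + e i) - w *\<^sub>R V i t)"
    if "i < 2*n" "t \<in> {tp i..tp (Suc i)}" for i t
    unfolding vd_def CWMS_def
    by (rule vector_derivative_within_closed_interval[OF mono[OF that(1)] that(2)])
       (intro hvd_scale has_vector_derivative_diff hG hB hV that)
  define X where "X i t = det2 (\<gamma> t) (G i t)" for i t
  define Y where "Y i t = det2 (\<gamma> (t + T)) (G (\<sigma> i) (t + e i))" for i t
  define D where "D i t = det2 (V i t) (\<gamma> t - \<gamma> (t + T)) + det2 (u t) (G i t - G (\<sigma> i) (t + e i))" for i t
  define P where "P i t = det2 (u t) (G i t)" for i t
  define Q where "Q i t = det2 (u t) (G (\<sigma> i) (t + e i))" for i t
  define R where "R i t = det2 (u t) (V i t)" for i t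
  define W where "W i t = det2 ((1/2) *\<^sub>R (\<gamma> t + \<gamma> (t + T))) ((1/2) *\<^sub>R (G i t + G (\<sigma> i) (t + e i)))" for i t
  define C where "C i t = det2 ((1/2) *\<^sub>R (\<gamma> t - \<gamma> (t + T) - w *\<^sub>R u t))
       ((1/2) *\<^sub>R (G i t - G (\<sigma> i) (t + e i) - w *\<^sub>R V i t))" for i t
  have cont: "continuous_on {tp i..tp (Suc i)} (X i) \<and> continuous_on {tp i..tp (Suc i)} (Y i) \<and>
     continuous_on {tp i..tp (Suc i)} (D i) \<and> continuous_on {tp i..tp (Suc i)} (P i) \<and>
     continuous_on {tp i..tp (Suc i)} (Q i) \<and> continuous_on {tp i..tp (Suc i)} (R i) \<and>
     continuous_on {tp i..tp (Suc i)} (W i) \<and> continuous_on {tp i..tp (Suc i)} (C i)" if "i < 2*n" for i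
    using cG[OF that] cB[OF that] cV[OF that] cg cu cgT
    unfolding X_def Y_def D_def P_def Q_def R_def W_def C_def
    by (intro conjI cont_det2 continuous_intros) auto
  have K1: "parea tp (2*n) \<gamma> = (1/2) * (\<Sum>i<2*n. integral {tp i..tp (Suc i)} (X i))"
    unfolding parea_def X_def G_def ..
  have K2: "parea tp n (WC T \<gamma>) = (1/2) * (\<Sum>i<n. integral {tp i..tp (Suc i)} (W i))"
    unfolding parea_def
  proof (intro arg_cong[where f="\<lambda>x. (1/2) * x"] sum.cong refl integral_cong)
    fix i t assume "i \<in> {..<n}" "t \<in> {tp i..tp (Suc i)}"
    then show "det2 (WC T \<gamma> t) (vd (WC T \<gamma>) (tp i) (tp (Suc i)) t) = W i t"
      using vdWC[of i t] unfolding W_def WC_def by simp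
  qed
  have K3: "parea tp (2*n) (CWMS T w u \<gamma>) = (1/2) * (\<Sum>i<2*n. integral {tp i..tp (Suc i)} (C i))"
    unfolding parea_def
  proof (intro arg_cong[where f="\<lambda>x. (1/2) * x"] sum.cong refl integral_cong)
    fix i t assume "i \<in> {..<2*n}" "t \<in> {tp i..tp (Suc i)}"
    then show "det2 (CWMS T w u \<gamma> t) (vd (CWMS T w u \<gamma>) (tp i) (tp (Suc i)) t) = C i t"
      using vdC[of i t] unfolding C_def CWMS_def by simp
  qed
  have K4: "(\<Sum>i<n. integral {tp i..tp (Suc i)} (W i)) = (1/2) * (\<Sum>i<2*n. integral {tp i..tp (Suc i)} (W i))"
  proof -
    have "integral {tp (i+n)..tp (Suc (i+n))} (W (i+n)) = integral {tp i..tp (Suc i)} (W i)" if "i < n" for i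
    proof -
      have e1: "tp (i+n) = tp i + T" "tp (Suc (i+n)) = tp (Suc i) + T"
        using tpT[of i] tpT[of "Suc i"] that by auto
      have s1: "\<sigma> (i+n) = i" "e (i+n) = -T" "\<sigma> i = i+n" "e i = T" using that by (auto simp: \<sigma>_def e_def)
      have "W (i+n) (T + t) = W i t" for t
      proof -
        have "T + t + T = t + 2*T" by simp
        hence a1: "\<gamma> (T + t + T) = \<gamma> t" using g2T[of t] by metis
        have a2: "T + t + e (i+n) = t" using s1 by simp
        have a3: "G (i+n) (T+t) = G (\<sigma> i) (t + e i)" using s1 by (simp add: add.commute)
        have a4: "\<gamma> (T+t) = \<gamma> (t+T)" by (simp add: add.commute)
        have "W (i+n) (T + t) = det2 ((1/2) *\<^sub>R (\<gamma> (t+T) + \<gamma> t)) ((1/2) *\<^sub>R (G (\<sigma> i) (t + e i) + G i t))"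
          unfolding W_def a1 a2 a3 a4 s1(1) ..
        also have "\<dots> = W i t" unfolding W_def by (simp only: add.commute)
        finally show ?thesis .
      qed
      hence "integral {tp i..tp (Suc i)} (W (i+n) \<circ> (+) T) = integral {tp i..tp (Suc i)} (W i)"
        by (simp add: o_def)
      thus ?thesis using integral_shift_Icc_real[of "tp i" "tp (Suc i)" "W (i+n)" T] e1 by simp
    qed
    hence "(\<Sum>i<n. integral {tp (i+n)..tp (Suc (i+n))} (W (i+n))) = (\<Sum>i<n. integral {tp i..tp (Suc i)} (W i))"
      by simp
    thus ?thesis using sum_split2[of "\<lambda>i. integral {tp i..tp (Suc i)} (W i)" n] by simp
  qed
  have K5: "(\<Sum>i<2*n. integral {tp i..tp (Suc i)} (Y i)) = (\<Sum>i<2*n. integral {tp i..tp (Suc i)} (X i))"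
  proof -
    have "Y i = (\<lambda>t. X (\<sigma> i) (t + e i))" for i unfolding X_def Y_def G_def using gshift by auto
    thus ?thesis using shiftsum[of X] by simp
  qed
  have K6: "(\<Sum>i<2*n. integral {tp i..tp (Suc i)} (Q i)) = - (\<Sum>i<2*n. integral {tp i..tp (Suc i)} (P i))"
  proof -
    have "Q i = (\<lambda>t. (\<lambda>j s. - P j s) (\<sigma> i) (t + e i))" for i
      unfolding P_def Q_def using ushift by (auto simp: det2_neg_left)
    hence "(\<Sum>i<2*n. integral {tp i..tp (Suc i)} (Q i)) = (\<Sum>i<2*n. integral {tp i..tp (Suc i)} (\<lambda>s. - P i s))"
      using shiftsum[of "\<lambda>j s. - P j s"] by simp
    thus ?thesis by (simp add: integral_neg sum_negf)
  qed
  have K7: "(\<Sum>i<2*n. integral {tp i..tp (Suc i)} (P i)) = L"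
    unfolding L_def Lstar_def
  proof (intro sum.cong refl)
    fix i assume i: "i \<in> {..<2*n}"
    show "integral {tp i..tp (Suc i)} (P i) = integral {tp i..tp (Suc i)} (\<lambda>t. r t * det2 (u t) (vd u (tp i) (tp (Suc i)) t))"
    proof (rule integral_spike[of "{tp i, tp (Suc i)}"])
      show "negligible {tp i, tp (Suc i)}" by auto
      fix t assume "t \<in> {tp i..tp (Suc i)} - {tp i, tp (Suc i)}"
      hence "t \<in> {tp i<..<tp (Suc i)}" by auto
      thus "r t * det2 (u t) (vd u (tp i) (tp (Suc i)) t) = P i t"
        using gr[of i t] i unfolding P_def G_def by (simp add: det2_scaleR_right)
    qed
  qed
  have K8: "(\<Sum>i<2*n. integral {tp i..tp (Suc i)} (R i)) = 2 * Au"
    unfolding Au_def parea_def R_def V_def by simp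
  define \<phi> where "\<phi> t = det2 (u t) (\<gamma> t - \<gamma> (t + T))" for t
  have K9: "(\<Sum>i<2*n. integral {tp i..tp (Suc i)} (D i)) = 0"
  proof -
    have "integral {tp i..tp (Suc i)} (D i) = \<phi> (tp (Suc i)) - \<phi> (tp i)" if "i < 2*n" for i
    proof (rule integral_unique, rule fundamental_theorem_of_calculus)
      show "tp i \<le> tp (Suc i)" using mono[OF that] by simp
      fix t assume t: "t \<in> {tp i..tp (Suc i)}"
      show "(\<phi> has_vector_derivative D i t) (at t within {tp i..tp (Suc i)})"
        unfolding \<phi>_def D_def
        by (rule det2_hvd[OF hV[OF that t] has_vector_derivative_diff[OF hG[OF that t] hB[OF that t]]])
    qed
    hence "(\<Sum>i<2*n. integral {tp i..tp (Suc i)} (D i)) = (\<Sum>i<2*n. \<phi> (tp (Suc i)) - \<phi> (tp i))" by simp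
    also have "\<dots> = \<phi> (tp (2*n)) - \<phi> (tp 0)" by (rule sum_lessThan_telescope)
    also have "\<dots> = 0"
    proof -
      have "u (2*T) = u 0"
      proof -
        have 1: "u (T+T) = - u T" by (rule uT)
        have "u (0+T) = - u 0" by (rule uT)
        hence 2: "u T = - u 0" by simp
        show ?thesis unfolding mult_2 1 2 by simp
      qed
      moreover have "\<gamma> (2*T) = \<gamma> 0" using g2T[of 0] by simp
      moreover have "\<gamma> (2*T + T) = \<gamma> (0 + T)"
      proof -
        have "2*T + T = T + 2*T" by simp
        thus ?thesis using g2T[of T] by simp
      qed
      ultimately show ?thesis unfolding \<phi>_def tp2n tp0 by simp
    qed
    finally show ?thesis .
  qed
  have pw: "(1/2) * integral {tp i..tp (Suc i)} (X i) - (1/2) * integral {tp i..tp (Suc i)} (W i)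
      - (1/2) * integral {tp i..tp (Suc i)} (C i)
    = (1/4) * integral {tp i..tp (Suc i)} (X i) - (1/4) * integral {tp i..tp (Suc i)} (Y i)
      - (w/8) * integral {tp i..tp (Suc i)} (D i)
      + (w/4) * (integral {tp i..tp (Suc i)} (P i) - integral {tp i..tp (Suc i)} (Q i))
      - (w^2/8) * integral {tp i..tp (Suc i)} (R i)" if "i < 2*n" for i
  proof -
    note c = cont[OF that]
    have "(1/2) * integral {tp i..tp (Suc i)} (X i) - (1/2) * integral {tp i..tp (Suc i)} (W i)
      - (1/2) * integral {tp i..tp (Suc i)} (C i)
      = integral {tp i..tp (Suc i)} (\<lambda>t. (1/2) * X i t - (1/2) * W i t - (1/2) * C i t)"
      by (rule int_comb3[symmetric]) (use c in auto)
    also have "\<dots> = integral {tp i..tp (Suc i)} (\<lambda>t. (1/4) * X i t - (1/4) * Y i t - (w/8) * D i t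
        + (w/4) * (P i t - Q i t) - (w^2/8) * R i t)"
      unfolding X_def W_def C_def Y_def D_def P_def Q_def R_def by (rule integral_cong) (rule pointwise)
    also have "\<dots> = (1/4) * integral {tp i..tp (Suc i)} (X i) - (1/4) * integral {tp i..tp (Suc i)} (Y i)
      - (w/8) * integral {tp i..tp (Suc i)} (D i)
      + (w/4) * (integral {tp i..tp (Suc i)} (P i) - integral {tp i..tp (Suc i)} (Q i))
      - (w^2/8) * integral {tp i..tp (Suc i)} (R i)"
      by (rule int_comb6) (use c in auto)
    finally show ?thesis .
  qed
  define SX where "SX = (\<Sum>i<2*n. integral {tp i..tp (Suc i)} (X i))"
  define SY where "SY = (\<Sum>i<2*n. integral {tp i..tp (Suc i)} (Y i))"
  define SD where "SD = (\<Sum>i<2*n. integral {tp i..tp (Suc i)} (D i))"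
  define SP where "SP = (\<Sum>i<2*n. integral {tp i..tp (Suc i)} (P i))"
  define SQ where "SQ = (\<Sum>i<2*n. integral {tp i..tp (Suc i)} (Q i))"
  define SR where "SR = (\<Sum>i<2*n. integral {tp i..tp (Suc i)} (R i))"
  define SW where "SW = (\<Sum>i<2*n. integral {tp i..tp (Suc i)} (W i))"
  define SC where "SC = (\<Sum>i<2*n. integral {tp i..tp (Suc i)} (C i))"
  have tot: "(1/2) * SX - (1/2) * SW - (1/2) * SC
      = (1/4) * SX - (1/4) * SY - (w/8) * SD + (w/4) * (SP - SQ) - (w^2/8) * SR"
  proof -
    have "(\<Sum>i<2*n. (1/2) * integral {tp i..tp (Suc i)} (X i) - (1/2) * integral {tp i..tp (Suc i)} (W i)
      - (1/2) * integral {tp i..tp (Suc i)} (C i))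
      = (\<Sum>i<2*n. (1/4) * integral {tp i..tp (Suc i)} (X i) - (1/4) * integral {tp i..tp (Suc i)} (Y i)
      - (w/8) * integral {tp i..tp (Suc i)} (D i)
      + (w/4) * (integral {tp i..tp (Suc i)} (P i) - integral {tp i..tp (Suc i)} (Q i))
      - (w^2/8) * integral {tp i..tp (Suc i)} (R i))"
      by (rule sum.cong[OF refl]) (use pw in auto)
    thus ?thesis unfolding SX_def SY_def SD_def SP_def SQ_def SR_def SW_def SC_def
      by (simp only: sum_subtractf sum.distrib sum_distrib_left right_diff_distrib)
  qed
  have fin: "parea tp (2*n) \<gamma> - 2 * parea tp n (WC T \<gamma>) - parea tp (2*n) (CWMS T w u \<gamma>)
      = w * L / 2 - w^2 * Au / 4"
  proof -
    have "parea tp (2*n) \<gamma> - 2 * parea tp n (WC T \<gamma>) - parea tp (2*n) (CWMS T w u \<gamma>)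
        = (1/2) * SX - (1/2) * SW - (1/2) * SC"
      unfolding K1 K2 K3 K4 SX_def SW_def SC_def by simp
    also have "\<dots> = (1/4) * SX - (1/4) * SY - (w/8) * SD + (w/4) * (SP - SQ) - (w^2/8) * SR" by (rule tot)
    also have "\<dots> = w * L / 2 - w^2 * Au / 4"
      using K5 K6 K7 K8 K9 unfolding SX_def SY_def SD_def SP_def SQ_def SR_def by (simp add: mult.commute)
    finally show ?thesis .
  qed
  have "L^2 / (4 * Au) = w * L / 2 - w^2 * Au / 4"
  proof (cases "Au = 0")
    case True thus ?thesis by (simp add: w_def)
  next
    case False thus ?thesis by (simp add: w_def field_simps power2_eq_square)
  qed
  thus ?thesis using fin unfolding L_def[symmetric] Au_def[symmetric] w_def[symmetric] by simp
qed

end
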